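(* Let $(P, T, h)$ be an acyclic sensor network and let $P_{\chi}$ be a $\chi$-minimal model of $P$. Let $\widetilde{P}_{\chi} = \{x \in P_{\chi} \mid h(x) \ge 1\}$ with the order induced from $P$. Then \[ \int_{\widetilde{P}_{\chi}} h|_{\widetilde{P}_{\chi}} \, d\chi = \int_{P} h \, d\chi . \]
   Context: For a finite poset $P$, the zeta function is the $P \times P$ matrix with $\zeta(x,y)=1$ if $x \le y$ and $0$ otherwise; it is invertible, and the Euler characteristic is $\chi(P) = \sum_{x,y} \zeta^{-1}(x,y)$ ($\chi(\emptyset)=0$). A filter is an upward-closed subset; $\delta_S$ is the indicator function of $S$. Every $g : P \to \mathbb{Z}$ can be written as $g = \sum_i a_i \delta_{S_i}$ with $a_i \in \mathbb{Z}$ and $S_i$ filters; the Euler calculus is $\int_P g\, d\chi = \sum_i a_i \chi(S_i)$, independent of the representation; for a subposet $S$, $\int_S g|_S\, d\chi$ is computed in the poset $S$. A point $x$ of a finite poset $R$ is a $\chi$-point if $\chi(R_{>x}) = 1$, where $R_{>x} = \{y \in R \mid y > x\}$. A $\chi$-minimal model of $P$ is a subposet obtained from $P$ by repeatedly removing one point that is a $\chi$-point of the current subposet, until no $\chi$-points remain. An acyclic sensor network $(P,T,h)$ consists of a finite poset $P$, a finite set $T$ of targets, which are points of the Hasse diagram of $P$ viewed as a one-dimensional simplicial complex (each target lies at a node or in the interior of an edge), and the counting function $h : P \to \mathbb{Z}_{\ge 0}$, where $h(x)$ is the number of targets lying in the part of the Hasse diagram spanned by the prime ideal $P_{\le x}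 = \{y \in P \mid y \le x\}$ (i.e. at nodes of $P_{\le x}$ or on edges between nodes of $P_{\le x}$). *)

theory Defs
  imports Complex_Main
begin

text \<open>A finite poset is a finite carrier set P of elements of an ordered type,
  with the induced order; subposets are subsets with the induced order.\<close>

definition zeta :: "'a::order \<Rightarrow> 'a \<Rightarrow> int" where
  "zeta x y = (if x \<le> y then 1 else 0)"

definition zeta_inv :: "'a::order set \<Rightarrow> 'a \<Rightarrow> 'a \<Rightarrow> int" where
  "zeta_inv S = (THE m.
      (\<forall>x y. (x \<notin> S \<or> y \<notin> S) \<longrightarrow> m x y = 0) \<and>
      (\<forall>x\<in>S. \<forall>y\<in>S. (\<Sum>z\<in>S. zeta x z * m z y) = (if x = y then 1 else 0)) \<and>
      (\<forall>x\<in>S. \<forall>y\<in>S. (\<Sum>z\<in>S. m x z * zeta z y) = (if x = y then 1 else 0)))"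

definition euler_char :: "'a::order set \<Rightarrow> int" where
  "euler_char S = (\<Sum>x\<in>S. \<Sum>y\<in>S. zeta_inv S x y)"

definition is_upset :: "'a::order set \<Rightarrow> 'a set \<Rightarrow> bool" where
  "is_upset P S \<longleftrightarrow> S \<subseteq> P \<and> (\<forall>x\<in>S. \<forall>y\<in>P. x \<le> y \<longrightarrow> y \<in> S)"

definition indic :: "'a set \<Rightarrow> 'a \<Rightarrow> int" where
  "indic S x = (if x \<in> S then 1 else 0)"

definition euler_integral :: "'a::order set \<Rightarrow> ('a \<Rightarrow> int) \<Rightarrow> int" where
  "euler_integral P g = (THE c. \<exists>rep :: (int \<times> 'a set) list.
      (\<forall>(a, S) \<in> set rep. is_upset P S) \<and>
      (\<forall>x\<in>P. g x = (\<Sum>(a, S) \<leftarrow> rep. a * indic S x)) \<and>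
      c = (\<Sum>(a, S) \<leftarrow> rep. a * euler_char S))"

definition chi_point :: "'a::order set \<Rightarrow> 'a \<Rightarrow> bool" where
  "chi_point R x \<longleftrightarrow> x \<in> R \<and> euler_char {y \<in> R. x < y} = 1"

inductive chi_reduces :: "'a::order set \<Rightarrow> 'a set \<Rightarrow> bool" where
  refl: "chi_reduces R R"
| step: "chi_point R x \<Longrightarrow> chi_reduces (R - {x}) Q \<Longrightarrow> chi_reduces R Q"

definition chi_minimal_model :: "'a::order set \<Rightarrow> 'a set \<Rightarrow> bool" where
  "chi_minimal_model P Q \<longleftrightarrow> chi_reduces P Q \<and> \<not> (\<exists>x. chi_point Q x)"

text \<open>Points of the Hasse diagram: a node, or the point at parameter r \<in> (0,1)
  in the interior of the edge from x to y (x covered by y).\<close>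
datatype 'a hpoint = Node 'a | EdgePt 'a 'a real

definition covers :: "'a::order set \<Rightarrow> 'a \<Rightarrow> 'a \<Rightarrow> bool" where
  "covers P x y \<longleftrightarrow> x \<in> P \<and> y \<in> P \<and> x < y \<and> \<not> (\<exists>z\<in>P. x < z \<and> z < y)"

fun hasse_point :: "'a::order set \<Rightarrow> 'a hpoint \<Rightarrow> bool" where
  "hasse_point P (Node x) = (x \<in> P)"
| "hasse_point P (EdgePt x y r) = (covers P x y \<and> 0 < r \<and> r < 1)"

definition sensor_network :: "'a::order set \<Rightarrow> 'a hpoint set \<Rightarrow> bool" where
  "sensor_network P T \<longleftrightarrow> finite P \<and> finite T \<and> (\<forall>t\<in>T. hasse_point P t)"

fun in_ideal :: "'a::order \<Rightarrow> 'a hpoint \<Rightarrow> bool" where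
  "in_ideal x (Node z) = (z \<le> x)"
| "in_ideal x (EdgePt a b r) = (a \<le> x \<and> b \<le> x)"

definition sensor_count :: "'a::order hpoint set \<Rightarrow> 'a \<Rightarrow> int" where
  "sensor_count T x = int (card {t \<in> T. in_ideal x t})"

end

theory Submission
  imports Defs
begin

lemma up_unique:
  fixes S :: "'a::order set" and d :: "'a \<Rightarrow> int"
  assumes "finite S" "\<forall>x\<in>S. (\<Sum>z\<in>{z\<in>S. x \<le> z}. d z) = 0"
  shows "\<forall>x\<in>S. d x = 0"
proof (rule ccontr)
  assume "\<not> ?thesis"
  then have ne: "{x\<in>S. d x \<noteq> 0} \<noteq> {}" by auto
  obtain x where x: "x \<in> {x\<in>S. d x \<noteq> 0}" and mx: "\<forall>b\<in>{x\<in>S. d x \<noteq> 0}. x \<le> b \<longrightarrow> x = b"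
    using finite_has_maximal[OF _ ne] assms(1) by auto
  have e: "{z\<in>S. x \<le> z} = insert x {z\<in>S. x < z}" using x by auto
  have "(\<Sum>z\<in>{z\<in>S. x \<le> z}. d z) = d x + (\<Sum>z\<in>{z\<in>S. x < z}. d z)"
    unfolding e using assms(1) by (simp add: sum.insert)
  also have "(\<Sum>z\<in>{z\<in>S. x < z}. d z) = 0"
    apply (rule sum.neutral) using mx by force
  finally show False using x assms(2) by auto
qed

lemma up_exists:
  fixes S :: "'a::order set" and r :: "'a \<Rightarrow> int"
  assumes "finite S"
  shows "\<exists>d. \<forall>x\<in>S. (\<Sum>z\<in>{z\<in>S. x \<le> z}. d z) = r x"
  using assms
proof (induction "card S" arbitrary: S rule: less_induct)
  case less
  show ?case
  proof (cases "S = {}")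
    case True then show ?thesis by auto
  next
    case False
    obtain a where a: "a \<in> S" and ma: "\<forall>b\<in>S. b \<le> a \<longrightarrow> a = b"
      using finite_has_minimal[OF less.prems False] by auto
    let ?S0 = "S - {a}"
    have "card ?S0 < card S" using a less.prems by (meson card_Diff1_less)
    then obtain d0 where d0: "\<forall>x\<in>?S0. (\<Sum>z\<in>{z\<in>?S0. x \<le> z}. d0 z) = r x"
      using less.hyps less.prems by blast
    define d where "d = d0(a := r a - (\<Sum>z\<in>{z\<in>?S0. a \<le> z}. d0 z))"
    have "\<forall>x\<in>S. (\<Sum>z\<in>{z\<in>S. x \<le> z}. d z) = r x"
    proof
      fix x assume x: "x \<in> S"
      show "(\<Sum>z\<in>{z\<in>S. x \<le> z}. d z) = r x"
      proof (cases "x = a")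
        case True
        have e: "{z\<in>S. a \<le> z} = insert a {z\<in>?S0. a \<le> z}" using a by auto
        have s: "(\<Sum>z\<in>{z\<in>?S0. a \<le> z}. d z) = (\<Sum>z\<in>{z\<in>?S0. a \<le> z}. d0 z)"
          by (rule sum.cong) (auto simp: d_def)
        have "(\<Sum>z\<in>{z\<in>S. a \<le> z}. d z) = d a + (\<Sum>z\<in>{z\<in>?S0. a \<le> z}. d z)"
          unfolding e using less.prems by (simp add: sum.insert)
        then show ?thesis using True s by (simp add: d_def)
      next
        case False
        have e: "{z\<in>S. x \<le> z} = {z\<in>?S0. x \<le> z}" using ma False x by auto
        have "(\<Sum>z\<in>{z\<in>?S0. x \<le> z}. d z) = (\<Sum>z\<in>{z\<in>?S0. x \<le> z}. d0 z)"
          by (rule sum.cong) (auto simp: d_def)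
        then show ?thesis using e d0 x False by auto
      qed
    qed
    then show ?thesis by blast
  qed
qed

lemma zeta_sum:
  assumes "finite S"
  shows "(\<Sum>z\<in>S. zeta x z * f z) = (\<Sum>z\<in>{z\<in>S. x \<le> z}. f z)"
  unfolding sum.inter_filter[OF assms] by (rule sum.cong) (auto simp: zeta_def)

definition zprops :: "'a::order set \<Rightarrow> ('a \<Rightarrow> 'a \<Rightarrow> int) \<Rightarrow> bool" where
  "zprops S m \<longleftrightarrow> (\<forall>x y. (x \<notin> S \<or> y \<notin> S) \<longrightarrow> m x y = 0) \<and>
      (\<forall>x\<in>S. \<forall>y\<in>S. (\<Sum>z\<in>S. zeta x z * m z y) = (if x = y then 1 else 0)) \<and>
      (\<forall>x\<in>S. \<forall>y\<in>S. (\<Sum>z\<in>S. m x z * zeta z y) = (if x = y then 1 else 0))"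

lemma zprops_exists:
  fixes S :: "'a::order set"
  assumes fin: "finite S"
  shows "\<exists>m. zprops S m"
proof -
  have "\<forall>y. \<exists>d::'a\<Rightarrow>int. \<forall>x\<in>S. (\<Sum>z\<in>{z\<in>S. x \<le> z}. d z) = (if x = y then 1 else 0)"
  proof
    fix y show "\<exists>d::'a\<Rightarrow>int. \<forall>x\<in>S. (\<Sum>z\<in>{z\<in>S. x \<le> z}. d z) = (if x = y then 1 else 0)"
      using up_exists[OF fin, of "\<lambda>x. if x = y then 1 else 0"] by blast
  qed
  from choice[OF this] obtain D :: "'a \<Rightarrow> 'a \<Rightarrow> int" where D0: "\<forall>y. \<forall>x\<in>S. (\<Sum>z\<in>{z\<in>S. x \<le> z}. D y z) = (if x = y then 1 else 0)"
    by blast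
  note D = spec[OF D0]
  define m where "m x y = (if x \<in> S \<and> y \<in> S then D y x else 0)" for x y
  have R: "(\<Sum>z\<in>S. zeta x z * m z y) = (if x = y then 1 else 0)" if "x \<in> S" "y \<in> S" for x y
  proof -
    have "(\<Sum>z\<in>S. zeta x z * m z y) = (\<Sum>z\<in>{z\<in>S. x \<le> z}. m z y)" by (rule zeta_sum[OF fin])
    also have "\<dots> = (\<Sum>z\<in>{z\<in>S. x \<le> z}. D y z)" by (rule sum.cong) (auto simp: m_def that)
    finally show ?thesis using D that by auto
  qed
  have L: "(\<Sum>z\<in>S. m x z * zeta z y) = (if x = y then 1 else 0)" if xy: "x \<in> S" "y \<in> S" for x y
  proof -
    define c where "c x = (\<Sum>z\<in>S. m x z * zeta z y) - (if x = y then 1 else 0)" for x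
    have "\<forall>x\<in>S. (\<Sum>w\<in>{w\<in>S. x \<le> w}. c w) = 0"
    proof
      fix x assume x: "x \<in> S"
      have "(\<Sum>w\<in>{w\<in>S. x \<le> w}. (\<Sum>z\<in>S. m w z * zeta z y))
          = (\<Sum>w\<in>S. zeta x w * (\<Sum>z\<in>S. m w z * zeta z y))" by (rule zeta_sum[OF fin, symmetric])
      also have "\<dots> = (\<Sum>z\<in>S. (\<Sum>w\<in>S. zeta x w * m w z) * zeta z y)"
        unfolding sum_distrib_left sum_distrib_right by (subst sum.swap) (simp add: mult.assoc)
      also have "\<dots> = (\<Sum>z\<in>S. (if x = z then 1 else 0) * zeta z y)"
        by (rule sum.cong) (auto simp: R x)
      also have "\<dots> = (\<Sum>z\<in>S. if x = z then zeta z y else 0)" by (rule sum.cong) auto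
      also have "\<dots> = zeta x y" using x fin by simp
      finally have 1: "(\<Sum>w\<in>{w\<in>S. x \<le> w}. (\<Sum>z\<in>S. m w z * zeta z y)) = zeta x y" .
      have 2: "(\<Sum>w\<in>{w\<in>S. x \<le> w}. (if w = y then 1 else 0::int)) = zeta x y"
        using fin xy by (simp add: zeta_def sum.delta)
      show "(\<Sum>w\<in>{w\<in>S. x \<le> w}. c w) = 0"
        unfolding c_def sum_subtractf 1 2 by simp
    qed
    from up_unique[OF fin this] xy show ?thesis by (auto simp: c_def)
  qed
  have "zprops S m" unfolding zprops_def using R L by (auto simp: m_def)
  then show ?thesis by blast
qed


lemma zprops_unique:
  fixes S :: "'a::order set"
  assumes fin: "finite S" and m1: "zprops S m1" and m2: "zprops S m2"
  shows "m1 = m2"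
proof (rule ext, rule ext)
  fix x y
  show "m1 x y = m2 x y"
  proof (cases "x \<in> S \<and> y \<in> S")
    case False then show ?thesis using m1 m2 unfolding zprops_def by auto
  next
    case True
    define d where "d z = m1 z y - m2 z y" for z
    have "\<forall>u\<in>S. (\<Sum>z\<in>{z\<in>S. u \<le> z}. d z) = 0"
    proof
      fix u assume u: "u \<in> S"
      have "(\<Sum>z\<in>{z\<in>S. u \<le> z}. d z) = (\<Sum>z\<in>S. zeta u z * m1 z y) - (\<Sum>z\<in>S. zeta u z * m2 z y)"
        unfolding d_def sum_subtractf zeta_sum[OF fin] ..
      then show "(\<Sum>z\<in>{z\<in>S. u \<le> z}. d z) = 0" using m1 m2 u True unfolding zprops_def by auto
    qed
    from up_unique[OF fin this] True show ?thesis by (auto simp: d_def)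
  qed
qed

lemma zeta_inv_props:
  fixes S :: "'a::order set"
  assumes fin: "finite S"
  shows "zprops S (zeta_inv S)"
proof -
  have "\<exists>!m. zprops S m" using zprops_exists[OF fin] zprops_unique[OF fin] by blast
  from theI'[OF this] show ?thesis unfolding zeta_inv_def zprops_def[abs_def] by simp
qed

lemma euler_char_w:
  fixes S :: "'a::order set"
  assumes fin: "finite S" and w: "\<forall>x\<in>S. (\<Sum>z\<in>{z\<in>S. x \<le> z}. w z) = 1"
  shows "euler_char S = (\<Sum>x\<in>S. w x)"
proof -
  define w0 where "w0 x = (\<Sum>y\<in>S. zeta_inv S x y)" for x
  have P: "zprops S (zeta_inv S)" by (rule zeta_inv_props[OF fin])
  have w0: "\<forall>x\<in>S. (\<Sum>z\<in>{z\<in>S. x \<le> z}. w0 z) = 1"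
  proof
    fix x assume x: "x \<in> S"
    have "(\<Sum>z\<in>{z\<in>S. x \<le> z}. w0 z) = (\<Sum>z\<in>S. zeta x z * w0 z)" by (rule zeta_sum[OF fin, symmetric])
    also have "\<dots> = (\<Sum>y\<in>S. (\<Sum>z\<in>S. zeta x z * zeta_inv S z y))"
      unfolding w0_def sum_distrib_left by (rule sum.swap)
    also have "\<dots> = (\<Sum>y\<in>S. if x = y then 1 else 0)"
      by (rule sum.cong) (use P x in \<open>auto simp: zprops_def\<close>)
    also have "\<dots> = 1" using x fin by simp
    finally show "(\<Sum>z\<in>{z\<in>S. x \<le> z}. w0 z) = 1" .
  qed
  have "\<forall>u\<in>S. (\<Sum>z\<in>{z\<in>S. u \<le> z}. w z - w0 z) = 0"
    using w w0 by (simp add: sum_subtractf)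
  from up_unique[OF fin this] have "\<forall>x\<in>S. w x = w0 x" by auto
  then have "(\<Sum>x\<in>S. w x) = (\<Sum>x\<in>S. w0 x)" by (intro sum.cong) auto
  then show ?thesis unfolding euler_char_def w0_def by simp
qed

lemma w_exists:
  fixes S :: "'a::order set"
  assumes "finite S"
  shows "\<exists>w::'a\<Rightarrow>int. \<forall>x\<in>S. (\<Sum>z\<in>{z\<in>S. x \<le> z}. w z) = 1"
  using up_exists[OF assms, of "\<lambda>_. 1"] by blast

lemma euler_char_upset:
  fixes S :: "'a::order set"
  assumes fin: "finite S" and w: "\<forall>x\<in>S. (\<Sum>z\<in>{z\<in>S. x \<le> z}. w z) = 1"
    and US: "U \<subseteq> S" and up: "\<forall>x\<in>U. \<forall>z\<in>S. x \<le> z \<longrightarrow> z \<in> U"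
  shows "euler_char U = (\<Sum>x\<in>U. w x)"
proof (rule euler_char_w)
  show "finite U" using fin US finite_subset by blast
  show "\<forall>x\<in>U. (\<Sum>z\<in>{z\<in>U. x \<le> z}. w z) = 1"
  proof
    fix x assume x: "x \<in> U"
    have "{z\<in>U. x \<le> z} = {z\<in>S. x \<le> z}" using x US up by auto
    then show "(\<Sum>z\<in>{z\<in>U. x \<le> z}. w z) = 1" using w x US by auto
  qed
qed

lemma remove_chi:
  fixes S :: "'a::order set"
  assumes fin: "finite S" and x: "x \<in> S" and c: "euler_char {y\<in>S. x < y} = 1"
  shows "euler_char (S - {x}) = euler_char S"
proof -
  obtain w :: "'a \<Rightarrow> int" where w: "\<forall>u\<in>S. (\<Sum>z\<in>{z\<in>S. u \<le> z}. w z) = 1" using w_exists[OF fin] by blast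
  have "euler_char {y\<in>S. x < y} = (\<Sum>y\<in>{y\<in>S. x < y}. w y)"
    by (rule euler_char_upset[OF fin w]) auto
  then have s1: "(\<Sum>y\<in>{y\<in>S. x < y}. w y) = 1" using c by simp
  have e: "{z\<in>S. x \<le> z} = insert x {y\<in>S. x < y}" using x by auto
  have "(\<Sum>z\<in>{z\<in>S. x \<le> z}. w z) = w x + (\<Sum>y\<in>{y\<in>S. x < y}. w y)"
    unfolding e using fin by (simp add: sum.insert)
  then have wx: "w x = 0" using w x s1 by auto
  have rm: "(\<Sum>z\<in>A - {x}. w z) = (\<Sum>z\<in>A. w z)" if "finite A" for A
    using that wx by (simp add: sum_diff1)
  have "euler_char (S - {x}) = (\<Sum>z\<in>S - {x}. w z)"
  proof (rule euler_char_w)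
    show "finite (S - {x})" using fin by simp
    show "\<forall>u\<in>S - {x}. (\<Sum>z\<in>{z\<in>S - {x}. u \<le> z}. w z) = 1"
    proof
      fix u assume u: "u \<in> S - {x}"
      have "{z\<in>S - {x}. u \<le> z} = {z\<in>S. u \<le> z} - {x}" by auto
      then show "(\<Sum>z\<in>{z\<in>S - {x}. u \<le> z}. w z) = 1" using rm[of "{z\<in>S. u \<le> z}"] fin w u by auto
    qed
  qed
  also have "\<dots> = (\<Sum>z\<in>S. w z)" using rm fin by blast
  also have "\<dots> = euler_char S" using euler_char_w[OF fin w] by simp
  finally show ?thesis .
qed

lemma reduces_chi:
  fixes R Q :: "'a::order set"
  assumes "chi_reduces R Q" "finite R"
  shows "Q \<subseteq> R \<and> (\<forall>\<phi>. (\<forall>x y. \<phi> x \<longrightarrow> x \<le> y \<longrightarrow> \<phi> y) \<longrightarrow>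
            euler_char {x\<in>Q. \<phi> x} = euler_char {x\<in>R. \<phi> x})"
  using assms
proof (induction rule: chi_reduces.induct)
  case (refl R) then show ?case by simp
next
  case (step R x Q)
  have fin': "finite (R - {x})" using step.prems by simp
  note IH = step.IH[OF fin']
  have xR: "x \<in> R" and cx: "euler_char {y\<in>R. x < y} = 1" using step.hyps(1) unfolding chi_point_def by auto
  show ?case
  proof (intro conjI allI impI)
    show "Q \<subseteq> R" using IH by blast
  next
    fix \<phi> :: "'a \<Rightarrow> bool" assume up: "\<forall>x y. \<phi> x \<longrightarrow> x \<le> y \<longrightarrow> \<phi> y"
    have 1: "euler_char {y\<in>Q. \<phi> y} = euler_char {y\<in>R - {x}. \<phi> y}" using IH up by blast
    show "euler_char {y\<in>Q. \<phi> y} = euler_char {y\<in>R. \<phi> y}"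
    proof (cases "\<phi> x")
      case False
      then have "{y\<in>R - {x}. \<phi> y} = {y\<in>R. \<phi> y}" by auto
      then show ?thesis using 1 by simp
    next
      case True
      let ?S = "{y\<in>R. \<phi> y}"
      have a: "{y\<in>R - {x}. \<phi> y} = ?S - {x}" by auto
      have b: "{y\<in>?S. x < y} = {y\<in>R. x < y}" using True up less_imp_le by blast
      have "euler_char (?S - {x}) = euler_char ?S"
        by (rule remove_chi) (use step.prems xR True b cx in auto)
      then show ?thesis using 1 a by simp
    qed
  qed
qed

lemma rep_sum:
  fixes P :: "'a::order set"
  assumes fin: "finite P" and w: "\<forall>x\<in>P. (\<Sum>z\<in>{z\<in>P. x \<le> z}. w z) = 1"
  shows "(\<forall>(a, S) \<in> set rep. is_upset P S) \<Longrightarrow>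
    (\<Sum>x\<in>P. (\<Sum>(a, S) \<leftarrow> rep. a * indic S x) * w x) = (\<Sum>(a, S) \<leftarrow> rep. a * euler_char S)"
proof (induction rep)
  case Nil then show ?case by simp
next
  case (Cons p rep)
  obtain a S where p: "p = (a, S)" by (cases p)
  have upS: "is_upset P S" using Cons.prems p by auto
  have IH: "(\<Sum>x\<in>P. (\<Sum>(a, S) \<leftarrow> rep. a * indic S x) * w x) = (\<Sum>(a, S) \<leftarrow> rep. a * euler_char S)"
    using Cons by auto
  have "(\<Sum>x\<in>P. indic S x * w x) = (\<Sum>x\<in>{x\<in>P. x \<in> S}. w x)"
    unfolding sum.inter_filter[OF fin] by (rule sum.cong) (auto simp: indic_def)
  also have "{x\<in>P. x \<in> S} = S" using upS unfolding is_upset_def by auto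
  also have "(\<Sum>x\<in>S. w x) = euler_char S"
    by (rule euler_char_upset[OF fin w, symmetric]) (use upS in \<open>auto simp: is_upset_def\<close>)
  finally have eS: "(\<Sum>x\<in>P. indic S x * w x) = euler_char S" .
  have "(\<Sum>x\<in>P. (\<Sum>(a, S) \<leftarrow> p # rep. a * indic S x) * w x)
      = (\<Sum>x\<in>P. a * (indic S x * w x) + (\<Sum>(a, S) \<leftarrow> rep. a * indic S x) * w x)"
    by (rule sum.cong) (auto simp: p algebra_simps)
  also have "\<dots> = a * (\<Sum>x\<in>P. indic S x * w x) + (\<Sum>x\<in>P. (\<Sum>(a, S) \<leftarrow> rep. a * indic S x) * w x)"
    by (simp add: sum.distrib sum_distrib_left)
  also have "\<dots> = (\<Sum>(a, S) \<leftarrow> p # rep. a * euler_char S)" using eS IH p by simp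
  finally show ?case .
qed

lemma integral_eq:
  fixes P :: "'a::order set"
  assumes fin: "finite P" and up: "\<forall>(a, S) \<in> set rep. is_upset P S"
    and g: "\<forall>x\<in>P. g x = (\<Sum>(a, S) \<leftarrow> rep. a * indic S x)"
  shows "euler_integral P g = (\<Sum>(a, S) \<leftarrow> rep. a * euler_char S)"
proof -
  obtain w :: "'a \<Rightarrow> int" where w: "\<forall>x\<in>P. (\<Sum>z\<in>{z\<in>P. x \<le> z}. w z) = 1" using w_exists[OF fin] by blast
  have key: "(\<Sum>(a, S) \<leftarrow> rep'. a * euler_char S) = (\<Sum>x\<in>P. g x * w x)"
    if up': "\<forall>(a, S) \<in> set rep'. is_upset P S" and g': "\<forall>x\<in>P. g x = (\<Sum>(a, S) \<leftarrow> rep'. a * indic S x)"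
    for rep' :: "(int \<times> 'a set) list"
  proof -
    have "(\<Sum>x\<in>P. g x * w x) = (\<Sum>x\<in>P. (\<Sum>(a, S) \<leftarrow> rep'. a * indic S x) * w x)"
      using g' by (intro sum.cong) auto
    also have "\<dots> = (\<Sum>(a, S) \<leftarrow> rep'. a * euler_char S)" by (rule rep_sum[OF fin w up'])
    finally show ?thesis by simp
  qed
  show ?thesis unfolding euler_integral_def
  proof (rule the_equality)
    show "\<exists>rep'. (\<forall>(a, S) \<in> set rep'. is_upset P S) \<and> (\<forall>x\<in>P. g x = (\<Sum>(a, S) \<leftarrow> rep'. a * indic S x)) \<and>
        (\<Sum>(a, S) \<leftarrow> rep. a * euler_char S) = (\<Sum>(a, S) \<leftarrow> rep'. a * euler_char S)"
      using up g by blast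
  next
    fix c assume "\<exists>rep'. (\<forall>(a, S) \<in> set rep'. is_upset P S) \<and> (\<forall>x\<in>P. g x = (\<Sum>(a, S) \<leftarrow> rep'. a * indic S x)) \<and>
        c = (\<Sum>(a, S) \<leftarrow> rep'. a * euler_char S)"
    then obtain rep' where "\<forall>(a, S) \<in> set rep'. is_upset P S" "\<forall>x\<in>P. g x = (\<Sum>(a, S) \<leftarrow> rep'. a * indic S x)"
        "c = (\<Sum>(a, S) \<leftarrow> rep'. a * euler_char S)" by blast
    then show "c = (\<Sum>(a, S) \<leftarrow> rep. a * euler_char S)" using key[OF up g] key by simp
  qed
qed


lemma in_ideal_up: "in_ideal x t \<Longrightarrow> x \<le> y \<Longrightarrow> in_ideal y t"
  by (cases t) auto

lemma integral_count:
  fixes D :: "'a::order set" and T :: "'a hpoint set"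
  assumes fin: "finite D" and ts: "set ts = T" "distinct ts"
  shows "euler_integral D (sensor_count T) = (\<Sum>t\<in>T. euler_char {x\<in>D. in_ideal x t})"
proof -
  have finT: "finite T" using ts(1) by auto
  let ?rep = "map (\<lambda>t. (1::int, {x\<in>D. in_ideal x t})) ts"
  have up: "\<forall>(a, S) \<in> set ?rep. is_upset D S"
    by (auto simp: is_upset_def intro: in_ideal_up)
  have g: "\<forall>x\<in>D. sensor_count T x = (\<Sum>(a, S) \<leftarrow> ?rep. a * indic S x)"
  proof
    fix x assume x: "x \<in> D"
    have "(\<Sum>(a, S) \<leftarrow> ?rep. a * indic S x) = (\<Sum>t \<leftarrow> ts. indic {x\<in>D. in_ideal x t} x)"
      by (simp add: o_def)
    also have "\<dots> = (\<Sum>t\<in>T. indic {x\<in>D. in_ideal x t} x)"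
      using ts by (simp add: sum_list_distinct_conv_sum_set)
    also have "\<dots> = (\<Sum>t\<in>T. if in_ideal x t then 1 else 0)"
      by (rule sum.cong) (auto simp: indic_def x)
    also have "\<dots> = sensor_count T x"
      unfolding sensor_count_def sum.inter_filter[OF finT, symmetric] by simp
    finally show "sensor_count T x = (\<Sum>(a, S) \<leftarrow> ?rep. a * indic S x)" by simp
  qed
  have "euler_integral D (sensor_count T) = (\<Sum>(a, S) \<leftarrow> ?rep. a * euler_char S)"
    by (rule integral_eq[OF fin up g])
  also have "\<dots> = (\<Sum>t \<leftarrow> ts. euler_char {x\<in>D. in_ideal x t})" by (simp add: o_def)
  also have "\<dots> = (\<Sum>t\<in>T. euler_char {x\<in>D. in_ideal x t})"
    using ts by (simp add: sum_list_distinct_conv_sum_set)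
  finally show ?thesis .
qed

theorem theorem4p11:
  fixes P Q :: "'a::order set" and T :: "'a hpoint set"
  assumes "sensor_network P T"
    and "chi_minimal_model P Q"
  shows "euler_integral {x \<in> Q. sensor_count T x \<ge> 1} (sensor_count T)
         = euler_integral P (sensor_count T)"
proof -
  have finP: "finite P" and finT: "finite T" using assms(1) unfolding sensor_network_def by auto
  have red: "chi_reduces P Q" using assms(2) unfolding chi_minimal_model_def by auto
  note R = reduces_chi[OF red finP]
  have QP: "Q \<subseteq> P" using R by blast
  let ?D = "{x \<in> Q. sensor_count T x \<ge> 1}"
  have finD: "finite ?D" by (rule finite_subset[OF _ finP]) (use QP in auto)
  obtain ts where ts: "set ts = T" "distinct ts" using finite_distinct_list[OF finT] by blast
  have "euler_integral ?D (sensor_count T) = (\<Sum>t\<in>T. euler_char {x\<in>?D. in_ideal x t})"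
    by (rule integral_count[OF finD ts])
  also have "\<dots> = (\<Sum>t\<in>T. euler_char {x\<in>P. in_ideal x t})"
  proof (rule sum.cong)
    fix t assume t: "t \<in> T"
    have "{x\<in>?D. in_ideal x t} = {x\<in>Q. in_ideal x t}"
    proof -
      have "sensor_count T x \<ge> 1" if "in_ideal x t" for x
      proof -
        have "{t \<in> T. in_ideal x t} \<noteq> {}" using t that by auto
        then have "card {t \<in> T. in_ideal x t} \<noteq> 0" using finT by simp
        then show ?thesis unfolding sensor_count_def by simp
      qed
      then show ?thesis by auto
    qed
    also have "euler_char {x\<in>Q. in_ideal x t} = euler_char {x\<in>P. in_ideal x t}"
      by (rule R[THEN conjunct2, rule_format, of "\<lambda>x. in_ideal x t"]) (use in_ideal_up in blast)
    finally show "euler_char {x\<in>?D. in_ideal x t} = euler_char {x\<in>P. in_ideal x t}" .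
  qed simp
  also have "\<dots> = euler_integral P (sensor_count T)"
    by (rule integral_count[OF finP ts, symmetric])
  finally show ?thesis .
qed

end
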